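(* Let $G$ be a finite group and $R_G = \{(g,h)\in G^2 \mid [g,h]=1\}$. Then $R_G$ admits a Mal'tsev polymorphism if and only if $G$ is abelian.
   Context: Here $[g,h]=ghg^{-1}h^{-1}$. For an $n$-ary relation $R\subseteq A^n$, a $d$-ary polymorphism of $R$ is a map $f:A^d\to A$ such that whenever $d$ tuples $(x_{1,1},\dots,x_{1,n}),\dots,(x_{d,1},\dots,x_{d,n})$ lie in $R$, the tuple obtained by applying $f$ coordinatewise, $(f(x_{1,1},\dots,x_{d,1}),\dots,f(x_{1,n},\dots,x_{d,n}))$, also lies in $R$. A Mal'tsev polymorphism is a ternary polymorphism $f$ with $f(x,x,y)=f(y,x,x)=y$ for all $x,y\in A$. *)

theory Defs
  imports "HOL-Algebra.Group"
begin

text \<open>An n-ary relation on A is a set of lists of length n over A.\<close>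

definition is_polymorphism ::
  "'a set \<Rightarrow> nat \<Rightarrow> 'a list set \<Rightarrow> nat \<Rightarrow> ('a list \<Rightarrow> 'a) \<Rightarrow> bool" where
  "is_polymorphism A n R d f \<longleftrightarrow>
     (\<forall>xs. length xs = d \<and> set xs \<subseteq> A \<longrightarrow> f xs \<in> A) \<and>
     (\<forall>ts. length ts = d \<and> (\<forall>t\<in>set ts. t \<in> R) \<longrightarrow>
        map (\<lambda>j. f (map (\<lambda>t. t ! j) ts)) [0..<n] \<in> R)"

definition is_maltsev_polymorphism ::
  "'a set \<Rightarrow> nat \<Rightarrow> 'a list set \<Rightarrow> ('a list \<Rightarrow> 'a) \<Rightarrow> bool" where
  "is_maltsev_polymorphism A n R f \<longleftrightarrow>
     is_polymorphism A n R 3 f \<and>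
     (\<forall>x\<in>A. \<forall>y\<in>A. f [x, x, y] = y \<and> f [y, x, x] = y)"

definition commutator :: "('a, 'b) monoid_scheme \<Rightarrow> 'a \<Rightarrow> 'a \<Rightarrow> 'a" where
  "commutator G g h = g \<otimes>\<^bsub>G\<^esub> h \<otimes>\<^bsub>G\<^esub> inv\<^bsub>G\<^esub> g \<otimes>\<^bsub>G\<^esub> inv\<^bsub>G\<^esub> h"

definition commuting_relation :: "('a, 'b) monoid_scheme \<Rightarrow> 'a list set" where
  "commuting_relation G = {[g, h] | g h. g \<in> carrier G \<and> h \<in> carrier G \<and>
                                       commutator G g h = \<one>\<^bsub>G\<^esub>}"

end

theory Submission
  imports Defs
begin

lemma comm_of_commutator:
  assumes "group G" "g \<in> carrier G" "h \<in> carrier G" "commutator G g h = \<one>\<^bsub>G\<^esub>"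
  shows "g \<otimes>\<^bsub>G\<^esub> h = h \<otimes>\<^bsub>G\<^esub> g"
proof -
  interpret group G by fact
  have "g \<otimes>\<^bsub>G\<^esub> h \<otimes>\<^bsub>G\<^esub> inv\<^bsub>G\<^esub> g \<otimes>\<^bsub>G\<^esub> inv\<^bsub>G\<^esub> h \<otimes>\<^bsub>G\<^esub> h \<otimes>\<^bsub>G\<^esub> g = h \<otimes>\<^bsub>G\<^esub> g"
    using assms by (simp add: commutator_def)
  moreover have "g \<otimes>\<^bsub>G\<^esub> h \<otimes>\<^bsub>G\<^esub> inv\<^bsub>G\<^esub> g \<otimes>\<^bsub>G\<^esub> inv\<^bsub>G\<^esub> h \<otimes>\<^bsub>G\<^esub> h \<otimes>\<^bsub>G\<^esub> g = g \<otimes>\<^bsub>G\<^esub> h"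
    using assms(2,3) by (simp add: m_assoc)
  ultimately show ?thesis by simp
qed

lemma comm_commutator:
  assumes "comm_group G" "g \<in> carrier G" "h \<in> carrier G"
  shows "commutator G g h = \<one>\<^bsub>G\<^esub>"
proof -
  interpret comm_group G by fact
  have "h \<otimes>\<^bsub>G\<^esub> inv\<^bsub>G\<^esub> g = inv\<^bsub>G\<^esub> g \<otimes>\<^bsub>G\<^esub> h"
    using assms(2,3) by (simp add: m_comm)
  then have "g \<otimes>\<^bsub>G\<^esub> (h \<otimes>\<^bsub>G\<^esub> inv\<^bsub>G\<^esub> g) \<otimes>\<^bsub>G\<^esub> inv\<^bsub>G\<^esub> h = \<one>\<^bsub>G\<^esub>"
    using assms(2,3) by (simp add: m_assoc[symmetric])
  thus ?thesis using assms(2,3) by (simp add: commutator_def m_assoc)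
qed

lemma upt2: "[0..<2] = [0::nat, 1]" by (simp add: upt_rec)

theorem lemma2p4:
  fixes G :: "('a, 'b) monoid_scheme"
  assumes "group G" and "finite (carrier G)"
  shows "(\<exists>f. is_maltsev_polymorphism (carrier G) 2 (commuting_relation G) f)
           \<longleftrightarrow> comm_group G"
proof
  interpret group G by fact
  assume "\<exists>f. is_maltsev_polymorphism (carrier G) 2 (commuting_relation G) f"
  then obtain f where f: "is_maltsev_polymorphism (carrier G) 2 (commuting_relation G) f" by blast
  show "comm_group G"
  proof (rule group_comm_groupI)
    fix g h assume g: "g \<in> carrier G" and h: "h \<in> carrier G"
    have R: "\<And>a b. a \<in> carrier G \<Longrightarrow> b \<in> carrier G \<Longrightarrow> commutator G a b = \<one>\<^bsub>G\<^esub> \<Longrightarrow> [a, b] \<in> commuting_relation G"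
      by (auto simp: commuting_relation_def)
    have c1: "commutator G a \<one>\<^bsub>G\<^esub> = \<one>\<^bsub>G\<^esub>" "commutator G \<one>\<^bsub>G\<^esub> a = \<one>\<^bsub>G\<^esub>" if "a \<in> carrier G" for a
      using that by (simp_all add: commutator_def)
    let ?ts = "[[g, \<one>\<^bsub>G\<^esub>], [\<one>\<^bsub>G\<^esub>, \<one>\<^bsub>G\<^esub>], [\<one>\<^bsub>G\<^esub>, h]]"
    have "\<forall>t\<in>set ?ts. t \<in> commuting_relation G"
      using g h c1 R by auto
    moreover have "length ?ts = 3" by simp
    ultimately have "map (\<lambda>j. f (map (\<lambda>t. t ! j) ?ts)) [0..<2] \<in> commuting_relation G"
      using f \<open>length ?ts = 3\<close> unfolding is_maltsev_polymorphism_def is_polymorphism_def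
      by blast
    then have "[f [g, \<one>\<^bsub>G\<^esub>, \<one>\<^bsub>G\<^esub>], f [\<one>\<^bsub>G\<^esub>, \<one>\<^bsub>G\<^esub>, h]] \<in> commuting_relation G"
      by (simp add: upt2)
    moreover have "f [g, \<one>\<^bsub>G\<^esub>, \<one>\<^bsub>G\<^esub>] = g" "f [\<one>\<^bsub>G\<^esub>, \<one>\<^bsub>G\<^esub>, h] = h"
      using f g h unfolding is_maltsev_polymorphism_def by auto
    ultimately have "commutator G g h = \<one>\<^bsub>G\<^esub>"
      by (auto simp: commuting_relation_def)
    then show "g \<otimes>\<^bsub>G\<^esub> h = h \<otimes>\<^bsub>G\<^esub> g" using comm_of_commutator[OF assms(1) g h] by simp
  qed
next
  assume cg: "comm_group G"
  interpret comm_group G by fact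
  define f where "f = (\<lambda>xs. xs ! 0 \<otimes>\<^bsub>G\<^esub> inv\<^bsub>G\<^esub> (xs ! 1) \<otimes>\<^bsub>G\<^esub> xs ! 2)"
  have "is_maltsev_polymorphism (carrier G) 2 (commuting_relation G) f"
    unfolding is_maltsev_polymorphism_def is_polymorphism_def
  proof (intro conjI allI impI ballI)
    fix xs :: "'a list" assume "length xs = 3 \<and> set xs \<subseteq> carrier G"
    then show "f xs \<in> carrier G"
      unfolding f_def by (auto simp: numeral_eq_Suc length_Suc_conv)
  next
    fix ts :: "'a list list"
    assume a: "length ts = 3 \<and> (\<forall>t\<in>set ts. t \<in> commuting_relation G)"
    then obtain t1 t2 t3 where ts: "ts = [t1, t2, t3]"
      by (auto simp: numeral_eq_Suc length_Suc_conv)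
    have "t1 \<in> commuting_relation G" "t2 \<in> commuting_relation G" "t3 \<in> commuting_relation G"
      using a ts by auto
    then obtain a1 b1 a2 b2 a3 b3 where
      "t1 = [a1, b1]" "t2 = [a2, b2]" "t3 = [a3, b3]"
      "a1 \<in> carrier G" "b1 \<in> carrier G" "a2 \<in> carrier G" "b2 \<in> carrier G"
      "a3 \<in> carrier G" "b3 \<in> carrier G"
      unfolding commuting_relation_def by blast
    then show "map (\<lambda>j. f (map (\<lambda>t. t ! j) ts)) [0..<2] \<in> commuting_relation G"
      using ts comm_commutator[OF cg]
      by (simp add: upt2 f_def commuting_relation_def)
  next
    fix x y assume "x \<in> carrier G" "y \<in> carrier G"
    then show "f [x, x, y] = y" "f [y, x, x] = y"
      by (simp_all add: f_def m_assoc)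
  qed
  then show "\<exists>f. is_maltsev_polymorphism (carrier G) 2 (commuting_relation G) f" by blast
qed

end
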